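(* Let $X$ be a complex Banach space, $\mathcal{F}$ a commutative algebra with unit, and $\Phi:\mathcal{F}\to\mathcal{C}(X)$ a proto-calculus. (a) If $(e_n)_n$ is a (weak) approximate identity for $f\in\mathcal{F}$ and for $g\in\mathcal{F}$, then it is a (weak) approximate identity for $f+g$ and for $\lambda f$ ($\lambda\in\mathbb{C}$), and $\overline{\Phi(f)+\Phi(g)}=\Phi(f+g)$. (b) If $(e_n)_n$ is a (strong) approximate identity for $f,g\in\mathcal{F}$, then $(e_n^2)_n$ is a strong approximate identity for $fg$, and $\overline{\Phi(f)\Phi(g)}=\Phi(fg)$.
   Context: $\mathcal{L}(X)$, $\mathcal{C}(X)$: bounded, resp. closed linear operators on $X$; operator inclusions are graph inclusions, sums/products have natural domains; $\overline{T}$ is the closure of a closable operator. A proto-calculus is a map $\Phi:\mathcal{F}\to\mathcal{C}(X)$ with (FC1) $\Phi(\mathbf{1})=I$; (FC2) $\lambda\Phi(f)\subseteq\Phi(\lambda f)$, $\Phi(f)+\Phi(g)\subseteq\Phi(f+g)$; (FC3) $\Phi(f)\Phi(g)\subseteq\Phi(fg)$, $\mathrm{dom}(\Phi(f)\Phi(g))=\mathrm{dom}(\Phi(g))\cap\mathrm{dom}(\Phi(fg))$. A sequence $(e_n)_n$ in $\mathcal{F}$ with $\Phi(e_n)\in\mathcal{L}(X)$ for all $n$ is a (strong) approximate identity if $\Phi(e_n)\to I$ strongly, and a weak approximate identity if $\Phi(e_n)\to I$ weakly. It is a (weak) approximate identity for $f\in\mathcal{F}$ if moreover $\Phi(e_n)\Phi(f)\subseteq\Phi(f)\Phi(e_n)=\Phi(fe_n)\in\mathcal{L}(X)$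 for all $n\in\mathbb{N}$. *)

theory Defs
  imports "HOL-Analysis.Analysis"
begin

text \<open>A complex Banach space is
modelled as a real Banach space (type class banach) together with a complex scalar
multiplication csmul extending the real one and compatible with the norm.\<close>

definition complex_banach :: "(complex \<Rightarrow> 'x::banach \<Rightarrow> 'x) \<Rightarrow> bool" where
  "complex_banach csmul \<longleftrightarrow>
     (\<forall>a x y. csmul a (x + y) = csmul a x + csmul a y) \<and>
     (\<forall>a b x. csmul (a + b) x = csmul a x + csmul b x) \<and>
     (\<forall>a b x. csmul a (csmul b x) = csmul (a * b) x) \<and>
     (\<forall>r x. csmul (complex_of_real r) x = r *\<^sub>R x) \<and>
     (\<forall>a x. norm (csmul a x) = cmod a * norm x)"

definition comm_calgebra :: "(complex \<Rightarrow> 'f::comm_ring_1 \<Rightarrow> 'f) \<Rightarrow> bool" where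
  "comm_calgebra smul \<longleftrightarrow>
     (\<forall>a f g. smul a (f + g) = smul a f + smul a g) \<and>
     (\<forall>a b f. smul (a + b) f = smul a f + smul b f) \<and>
     (\<forall>a b f. smul a (smul b f) = smul (a * b) f) \<and>
     (\<forall>f. smul 1 f = f) \<and>
     (\<forall>a f g. smul a (f * g) = smul a f * g)"

text \<open>A (possibly unbounded) linear operator on X is identified with its graph, a complex
linear subspace of X \<times> X which is single valued. Operator inclusion is graph
inclusion, the domain is Domain G.\<close>

definition is_op :: "(complex \<Rightarrow> 'x::banach \<Rightarrow> 'x) \<Rightarrow> ('x \<times> 'x) set \<Rightarrow> bool" where
  "is_op csmul G \<longleftrightarrow>
     (0, 0) \<in> G \<and>
     (\<forall>x y u v. (x, y) \<in> G \<longrightarrow> (u, v) \<in> G \<longrightarrow> (x + u, y + v) \<in> G) \<and>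
     (\<forall>a x y. (x, y) \<in> G \<longrightarrow> (csmul a x, csmul a y) \<in> G) \<and>
     (\<forall>x y z. (x, y) \<in> G \<longrightarrow> (x, z) \<in> G \<longrightarrow> y = z)"

definition closed_op :: "(complex \<Rightarrow> 'x::banach \<Rightarrow> 'x) \<Rightarrow> ('x \<times> 'x) set \<Rightarrow> bool" where
  "closed_op csmul G \<longleftrightarrow> is_op csmul G \<and> closed G"

definition bounded_op :: "(complex \<Rightarrow> 'x::banach \<Rightarrow> 'x) \<Rightarrow> ('x \<times> 'x) set \<Rightarrow> bool" where
  "bounded_op csmul G \<longleftrightarrow>
     (\<exists>T. G = {(x, T x) | x. True} \<and> bounded_linear T \<and>
          (\<forall>a x. T (csmul a x) = csmul a (T x)))"

definition op_app :: "('x \<times> 'x) set \<Rightarrow> 'x \<Rightarrow> 'x" where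
  "op_app G x = (THE y. (x, y) \<in> G)"

definition op_id :: "('x \<times> 'x) set" where
  "op_id = {(x, x) | x. True}"

text \<open>natural domains: sum, scalar multiple, product S T (first T, then S)\<close>
definition op_sum :: "('x::banach \<times> 'x) set \<Rightarrow> ('x \<times> 'x) set \<Rightarrow> ('x \<times> 'x) set" where
  "op_sum S T = {(x, y + z) | x y z. (x, y) \<in> S \<and> (x, z) \<in> T}"

definition op_scal :: "(complex \<Rightarrow> 'x \<Rightarrow> 'x) \<Rightarrow> complex \<Rightarrow> ('x \<times> 'x) set \<Rightarrow> ('x \<times> 'x) set" where
  "op_scal csmul a S = {(x, csmul a y) | x y. (x, y) \<in> S}"

definition op_mult :: "('x \<times> 'x) set \<Rightarrow> ('x \<times> 'x) set \<Rightarrow> ('x \<times> 'x) set" where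
  "op_mult S T = {(x, z) | x y z. (x, y) \<in> T \<and> (y, z) \<in> S}"

definition proto_calculus ::
  "(complex \<Rightarrow> 'f::comm_ring_1 \<Rightarrow> 'f) \<Rightarrow> (complex \<Rightarrow> 'x::banach \<Rightarrow> 'x) \<Rightarrow> ('f \<Rightarrow> ('x \<times> 'x) set) \<Rightarrow> bool" where
  "proto_calculus smul csmul \<Phi> \<longleftrightarrow>
     (\<forall>f. closed_op csmul (\<Phi> f)) \<and>
     \<Phi> 1 = op_id \<and>
     (\<forall>a f. op_scal csmul a (\<Phi> f) \<subseteq> \<Phi> (smul a f)) \<and>
     (\<forall>f g. op_sum (\<Phi> f) (\<Phi> g) \<subseteq> \<Phi> (f + g)) \<and>
     (\<forall>f g. op_mult (\<Phi> f) (\<Phi> g) \<subseteq> \<Phi> (f * g) \<and>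
            Domain (op_mult (\<Phi> f) (\<Phi> g)) = Domain (\<Phi> g) \<inter> Domain (\<Phi> (f * g)))"

definition cfunctional :: "(complex \<Rightarrow> 'x::banach \<Rightarrow> 'x) \<Rightarrow> ('x \<Rightarrow> complex) \<Rightarrow> bool" where
  "cfunctional csmul \<phi> \<longleftrightarrow> bounded_linear \<phi> \<and> (\<forall>a x. \<phi> (csmul a x) = a * \<phi> x)"

definition approx_identity ::
  "(complex \<Rightarrow> 'x::banach \<Rightarrow> 'x) \<Rightarrow> ('f \<Rightarrow> ('x \<times> 'x) set) \<Rightarrow> (nat \<Rightarrow> 'f) \<Rightarrow> bool" where
  "approx_identity csmul \<Phi> e \<longleftrightarrow>
     (\<forall>n. bounded_op csmul (\<Phi> (e n))) \<and>
     (\<forall>x. (\<lambda>n. op_app (\<Phi> (e n)) x) \<longlonglongrightarrow> x)"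

definition weak_approx_identity ::
  "(complex \<Rightarrow> 'x::banach \<Rightarrow> 'x) \<Rightarrow> ('f \<Rightarrow> ('x \<times> 'x) set) \<Rightarrow> (nat \<Rightarrow> 'f) \<Rightarrow> bool" where
  "weak_approx_identity csmul \<Phi> e \<longleftrightarrow>
     (\<forall>n. bounded_op csmul (\<Phi> (e n))) \<and>
     (\<forall>x \<phi>. cfunctional csmul \<phi> \<longrightarrow> (\<lambda>n. \<phi> (op_app (\<Phi> (e n)) x)) \<longlonglongrightarrow> \<phi> x)"

definition ai_commutes ::
  "(complex \<Rightarrow> 'x::banach \<Rightarrow> 'x) \<Rightarrow> ('f::comm_ring_1 \<Rightarrow> ('x \<times> 'x) set) \<Rightarrow> (nat \<Rightarrow> 'f) \<Rightarrow> 'f \<Rightarrow> bool" where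
  "ai_commutes csmul \<Phi> e f \<longleftrightarrow>
     (\<forall>n. op_mult (\<Phi> (e n)) (\<Phi> f) \<subseteq> op_mult (\<Phi> f) (\<Phi> (e n)) \<and>
          op_mult (\<Phi> f) (\<Phi> (e n)) = \<Phi> (f * e n) \<and>
          bounded_op csmul (\<Phi> (f * e n)))"

definition approx_identity_for ::
  "(complex \<Rightarrow> 'x::banach \<Rightarrow> 'x) \<Rightarrow> ('f::comm_ring_1 \<Rightarrow> ('x \<times> 'x) set) \<Rightarrow> (nat \<Rightarrow> 'f) \<Rightarrow> 'f \<Rightarrow> bool" where
  "approx_identity_for csmul \<Phi> e f \<longleftrightarrow> approx_identity csmul \<Phi> e \<and> ai_commutes csmul \<Phi> e f"

definition weak_approx_identity_for ::
  "(complex \<Rightarrow> 'x::banach \<Rightarrow> 'x) \<Rightarrow> ('f::comm_ring_1 \<Rightarrow> ('x \<times> 'x) set) \<Rightarrow> (nat \<Rightarrow> 'f) \<Rightarrow> 'f \<Rightarrow> bool" where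
  "weak_approx_identity_for csmul \<Phi> e f \<longleftrightarrow> weak_approx_identity csmul \<Phi> e \<and> ai_commutes csmul \<Phi> e f"

end

theory Submission
  imports Defs
begin


definition lgraph :: "('v::real_normed_vector \<times> real) set \<Rightarrow> bool" where
  "lgraph G \<longleftrightarrow> (0,0) \<in> G \<and>
     (\<forall>v r w s. (v,r) \<in> G \<longrightarrow> (w,s) \<in> G \<longrightarrow> (v+w, r+s) \<in> G) \<and>
     (\<forall>c v r. (v,r) \<in> G \<longrightarrow> (c *\<^sub>R v, c*r) \<in> G) \<and>
     (\<forall>v r s. (v,r) \<in> G \<longrightarrow> (v,s) \<in> G \<longrightarrow> r = s) \<and>
     (\<forall>v r. (v,r) \<in> G \<longrightarrow> r \<le> norm v)"

lemma lgraphD: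
  assumes "lgraph G"
  shows "(0,0) \<in> G" "\<And>v r w s. (v,r) \<in> G \<Longrightarrow> (w,s) \<in> G \<Longrightarrow> (v+w, r+s) \<in> G"
    "\<And>c v r. (v,r) \<in> G \<Longrightarrow> (c *\<^sub>R v, c*r) \<in> G"
    "\<And>v r s. (v,r) \<in> G \<Longrightarrow> (v,s) \<in> G \<Longrightarrow> r = s"
    "\<And>v r. (v,r) \<in> G \<Longrightarrow> r \<le> norm v"
  using assms unfolding lgraph_def by blast+

lemma hb_step:
  fixes G :: "('v::real_normed_vector \<times> real) set"
  assumes G: "lgraph G" and x0: "x0 \<notin> Domain G"
  shows "\<exists>G'. lgraph G' \<and> G \<subseteq> G' \<and> x0 \<in> Domain G'"
proof -
  have z: "(0,0) \<in> G"
    and ad: "\<And>v r w s. (v,r) \<in> G \<Longrightarrow> (w,s) \<in> G \<Longrightarrow> (v+w, r+s) \<in> G"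
    and sc: "\<And>c v r. (v,r) \<in> G \<Longrightarrow> (c *\<^sub>R v, c*r) \<in> G"
    and sv: "\<And>v r s. (v,r) \<in> G \<Longrightarrow> (v,s) \<in> G \<Longrightarrow> r = s"
    and nb: "\<And>v r. (v,r) \<in> G \<Longrightarrow> r \<le> norm v"
    using G unfolding lgraph_def by blast+
  have key: "r - norm (u - x0) \<le> norm (w + x0) - s" if "(u,r) \<in> G" "(w,s) \<in> G" for u r w s
  proof -
    have "r + s \<le> norm (u + w)" using nb[OF ad[OF that]] .
    also have "\<dots> \<le> norm (u - x0) + norm (w + x0)"
      using norm_triangle_ineq[of "u - x0" "w + x0"] by simp
    finally show ?thesis by simp
  qed
  define S where "S = {r - norm (v - x0) | v r. (v,r) \<in> G}"
  define c where "c = Sup S"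
  have Sne: "S \<noteq> {}" using z unfolding S_def by blast
  have Sbdd: "bdd_above S" unfolding S_def bdd_above_def
    using key[OF _ z] by fastforce
  have c1: "r - norm (u - x0) \<le> c" if "(u,r) \<in> G" for u r
    unfolding c_def by (rule cSup_upper[OF _ Sbdd]) (use that S_def in blast)
  have c2: "c \<le> norm (w + x0) - s" if "(w,s) \<in> G" for w s
    unfolding c_def by (rule cSup_least[OF Sne]) (use key that S_def in blast)
  define G' where "G' = {(v + t *\<^sub>R x0, r + t*c) | v r t. (v,r) \<in> G}"
  have "lgraph G'"
    unfolding lgraph_def
  proof (intro conjI allI impI)
    show "(0,0) \<in> G'" unfolding G'_def using z by force
  next
    fix v r w s assume "(v,r) \<in> G'" "(w,s) \<in> G'"
    then obtain v1 r1 t1 v2 r2 t2 where "(v1,r1) \<in> G" "(v2,r2) \<in> G"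
      "v = v1 + t1 *\<^sub>R x0" "r = r1 + t1*c" "w = v2 + t2 *\<^sub>R x0" "s = r2 + t2*c"
      unfolding G'_def by blast
    then show "(v+w, r+s) \<in> G'" unfolding G'_def
      by (intro CollectI exI[of _ "v1+v2"] exI[of _ "r1+r2"] exI[of _ "t1+t2"])
         (auto simp: algebra_simps ad)
  next
    fix a v r assume "(v,r) \<in> G'"
    then obtain v1 r1 t1 where "(v1,r1) \<in> G" "v = v1 + t1 *\<^sub>R x0" "r = r1 + t1*c"
      unfolding G'_def by blast
    then show "(a *\<^sub>R v, a*r) \<in> G'" unfolding G'_def
      by (intro CollectI exI[of _ "a *\<^sub>R v1"] exI[of _ "a*r1"] exI[of _ "a*t1"])
         (auto simp: algebra_simps sc)
  next
    fix v r s assume "(v,r) \<in> G'" "(v,s) \<in> G'"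
    then obtain v1 r1 t1 v2 r2 t2 where g: "(v1,r1) \<in> G" "(v2,r2) \<in> G"
      and e: "v = v1 + t1 *\<^sub>R x0" "r = r1 + t1*c" "v = v2 + t2 *\<^sub>R x0" "s = r2 + t2*c"
      unfolding G'_def by blast
    have d: "(v2 - v1, r2 - r1) \<in> G"
      using ad[OF g(2) sc[OF g(1), of "-1"]] by simp
    have "t1 = t2"
    proof (rule ccontr)
      assume ne: "t1 \<noteq> t2"
      have h: "(t1 - t2) *\<^sub>R x0 = v2 - v1" using e by (simp add: algebra_simps)
      have "x0 = (1/(t1 - t2)) *\<^sub>R ((t1 - t2) *\<^sub>R x0)" using ne by simp
      then have "x0 = (1/(t1 - t2)) *\<^sub>R (v2 - v1)" using h by simp
      then have "x0 \<in> Domain G" using sc[OF d] by blast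
      with x0 show False by simp
    qed
    then have "v1 = v2" using e by simp
    then have "r1 = r2" using sv g by blast
    then show "r = s" using e \<open>t1 = t2\<close> by simp
  next
    fix v r assume "(v,r) \<in> G'"
    then obtain v1 r1 t where g: "(v1,r1) \<in> G" and e: "v = v1 + t *\<^sub>R x0" "r = r1 + t*c"
      unfolding G'_def by blast
    consider "t > 0" | "t < 0" | "t = 0" by linarith
    then show "r \<le> norm v"
    proof cases
      case 1
      have "c \<le> norm ((1/t) *\<^sub>R v1 + x0) - (1/t) * r1" using c2[OF sc[OF g]] .
      then have "t * c \<le> t * (norm ((1/t) *\<^sub>R v1 + x0) - (1/t) * r1)"
        using 1 by (simp add: mult_left_mono)
      also have "\<dots> = t * norm ((1/t) *\<^sub>R v1 + x0) - r1" using 1 by (simp add: right_diff_distrib)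
      also have "\<dots> = norm (t *\<^sub>R ((1/t) *\<^sub>R v1 + x0)) - r1" using 1 by (simp only: norm_scaleR abs_of_pos)
      also have "t *\<^sub>R ((1/t) *\<^sub>R v1 + x0) = v" using 1 e by (simp add: algebra_simps)
      finally show ?thesis using e by simp
    next
      case 2
      define s where "s = - t"
      have s: "s > 0" using 2 s_def by simp
      have "(1/s) * r1 - norm ((1/s) *\<^sub>R v1 - x0) \<le> c" using c1[OF sc[OF g]] .
      then have "s * ((1/s) * r1 - norm ((1/s) *\<^sub>R v1 - x0)) \<le> s * c"
        using s by (simp add: mult_left_mono)
      moreover have "s * ((1/s) * r1 - norm ((1/s) *\<^sub>R v1 - x0)) = r1 - s * norm ((1/s) *\<^sub>R v1 - x0)"
        using s by (simp add: right_diff_distrib)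
      moreover have "s * norm ((1/s) *\<^sub>R v1 - x0) = norm (s *\<^sub>R ((1/s) *\<^sub>R v1 - x0))"
        using s by (simp only: norm_scaleR abs_of_pos)
      moreover have "s *\<^sub>R ((1/s) *\<^sub>R v1 - x0) = v" using s e s_def by (simp add: algebra_simps)
      ultimately have "r1 - norm v \<le> s * c" by (simp only:)
      then show ?thesis using e s_def by (simp add: algebra_simps)
    next
      case 3 then show ?thesis using e nb[OF g] by simp
    qed
  qed
  moreover have "G \<subseteq> G'" unfolding G'_def by force
  moreover have "x0 \<in> Domain G'" unfolding G'_def using z
    by (intro DomainI[of _ "0 + 1*c"]) (force)
  ultimately show ?thesis by blast
qed


lemma hb_extend:
  fixes G0 :: "('v::real_normed_vector \<times> real) set"
  assumes G0: "lgraph G0"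
  shows "\<exists>\<psi>. bounded_linear \<psi> \<and> (\<forall>(v,r)\<in>G0. \<psi> v = r)"
proof -
  define \<A> where "\<A> = {G. lgraph G \<and> G0 \<subseteq> G}"
  have "\<forall>C\<in>chains \<A>. \<exists>U\<in>\<A>. \<forall>X\<in>C. X \<subseteq> U"
  proof
    fix C assume C: "C \<in> chains \<A>"
    show "\<exists>U\<in>\<A>. \<forall>X\<in>C. X \<subseteq> U"
    proof (cases "C = {}")
      case True then show ?thesis using G0 \<A>_def by auto
    next
      case False
      have CA: "C \<subseteq> \<A>" using chainsD2[OF C] .
      have ch: "\<And>X Y. X \<in> C \<Longrightarrow> Y \<in> C \<Longrightarrow> X \<subseteq> Y \<or> Y \<subseteq> X" using chainsD[OF C] by blast
      have two: "\<exists>X\<in>C. p \<in> X \<and> q \<in> X" if "p \<in> \<Union>C" "q \<in> \<Union>C" for p q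
        using that ch by blast
      have "lgraph (\<Union>C)" unfolding lgraph_def
      proof (intro conjI allI impI)
        obtain X where "X \<in> C" using False by blast
        then have "lgraph X" using CA \<A>_def by blast
        then show "(0,0) \<in> \<Union>C" using \<open>X \<in> C\<close> lgraphD(1) by blast
      next
        fix v r w s assume "(v,r) \<in> \<Union>C" "(w,s) \<in> \<Union>C"
        then obtain X where "X \<in> C" "(v,r) \<in> X" "(w,s) \<in> X" using two by blast
        moreover then have "lgraph X" using CA \<A>_def by blast
        ultimately show "(v+w, r+s) \<in> \<Union>C" using lgraphD(2) by blast
      next
        fix c v r assume "(v,r) \<in> \<Union>C"
        then obtain X where "X \<in> C" "(v,r) \<in> X" by blast
        moreover then have "lgraph X" using CA \<A>_def by blast
        ultimately show "(c *\<^sub>R v, c*r) \<in> \<Union>C" using lgraphD(3) by blast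
      next
        fix v r s assume "(v,r) \<in> \<Union>C" "(v,s) \<in> \<Union>C"
        then obtain X where "X \<in> C" "(v,r) \<in> X" "(v,s) \<in> X" using two by blast
        moreover then have "lgraph X" using CA \<A>_def by blast
        ultimately show "r = s" using lgraphD(4) by blast
      next
        fix v r assume "(v,r) \<in> \<Union>C"
        then obtain X where "X \<in> C" "(v,r) \<in> X" by blast
        moreover then have "lgraph X" using CA \<A>_def by blast
        ultimately show "r \<le> norm v" using lgraphD(5) by blast
      qed
      moreover have "G0 \<subseteq> \<Union>C" using False CA \<A>_def by blast
      ultimately show ?thesis unfolding \<A>_def by blast
    qed
  qed
  from Zorn_Lemma2[OF this] obtain M where M: "M \<in> \<A>" and max: "\<And>X. X \<in> \<A> \<Longrightarrow> M \<subseteq> X \<Longrightarrow> X = M"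
    by blast
  have Ml: "lgraph M" and G0M: "G0 \<subseteq> M" using M \<A>_def by auto
  have dom: "x \<in> Domain M" for x
  proof (rule ccontr)
    assume "x \<notin> Domain M"
    from hb_step[OF Ml this] obtain G' where "lgraph G'" "M \<subseteq> G'" "x \<in> Domain G'" by blast
    moreover then have "G' = M" using max G0M \<A>_def by blast
    ultimately show False using \<open>x \<notin> Domain M\<close> by simp
  qed
  have z: "(0,0) \<in> M"
    and ad: "\<And>v r w s. (v,r) \<in> M \<Longrightarrow> (w,s) \<in> M \<Longrightarrow> (v+w, r+s) \<in> M"
    and sc: "\<And>c v r. (v,r) \<in> M \<Longrightarrow> (c *\<^sub>R v, c*r) \<in> M"
    and sv: "\<And>v r s. (v,r) \<in> M \<Longrightarrow> (v,s) \<in> M \<Longrightarrow> r = s"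
    and nb: "\<And>v r. (v,r) \<in> M \<Longrightarrow> r \<le> norm v"
    using Ml unfolding lgraph_def by blast+
  define \<psi> where "\<psi> v = (THE r. (v,r) \<in> M)" for v
  have psi: "(v, \<psi> v) \<in> M" for v
  proof -
    obtain r where "(v,r) \<in> M" using dom by blast
    then have "\<exists>!r. (v,r) \<in> M" using sv by blast
    then show ?thesis unfolding \<psi>_def by (rule theI')
  qed
  have psieq: "(v,r) \<in> M \<Longrightarrow> \<psi> v = r" for v r using sv psi by blast
  have "bounded_linear \<psi>"
  proof (rule bounded_linear_intro[where K=1])
    show "\<psi> (x + y) = \<psi> x + \<psi> y" for x y using psieq[OF ad[OF psi psi]] .
    show "\<psi> (r *\<^sub>R x) = r *\<^sub>R \<psi> x" for r x using psieq[OF sc[OF psi]] by simp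
    show "norm (\<psi> x) \<le> norm x * 1" for x
    proof -
      have "\<psi> x \<le> norm x" using nb[OF psi] .
      moreover have "\<psi> (-x) = - \<psi> x" using psieq[OF sc[OF psi, of "-1" x]] by simp
      moreover have "\<psi> (-x) \<le> norm x" using nb[OF psi, of "-x"] by simp
      ultimately show ?thesis by simp
    qed
  qed
  moreover have "\<forall>(v,r)\<in>G0. \<psi> v = r" using G0M psieq by blast
  ultimately show ?thesis by blast
qed

lemma hb_separate:
  fixes A :: "'v::real_normed_vector set"
  assumes A0: "0 \<in> A" and Aadd: "\<And>a b. a \<in> A \<Longrightarrow> b \<in> A \<Longrightarrow> a + b \<in> A"
    and Asc: "\<And>c a. a \<in> A \<Longrightarrow> c *\<^sub>R a \<in> A"
    and z: "z \<notin> closure A"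
  shows "\<exists>\<psi>::'v \<Rightarrow> real. bounded_linear \<psi> \<and> (\<forall>a\<in>A. \<psi> a = 0) \<and> \<psi> z \<noteq> 0"
proof -
  define d where "d = infdist z A"
  have "A \<noteq> {}" using A0 by blast
  then have dpos: "d > 0" using z in_closure_iff_infdist_zero[of A z] infdist_nonneg[of z A] d_def by force
  have zA: "z \<notin> A" using z closure_subset by blast
  define G0 where "G0 = {(a + t *\<^sub>R z, t * d) | a t. a \<in> A}"
  have "lgraph G0" unfolding lgraph_def
  proof (intro conjI allI impI)
    show "(0,0) \<in> G0" unfolding G0_def using A0
      by (intro CollectI exI[of _ 0] exI[of _ "0::real"]) simp
  next
    fix v r w s assume "(v,r) \<in> G0" "(w,s) \<in> G0"
    then obtain a t b u where "a \<in> A" "b \<in> A" "v = a + t *\<^sub>R z" "r = t * d" "w = b + u *\<^sub>R z" "s = u*d"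
      unfolding G0_def by blast
    then show "(v+w, r+s) \<in> G0" unfolding G0_def
      by (intro CollectI exI[of _ "a+b"] exI[of _ "t+u"]) (auto simp: algebra_simps Aadd)
  next
    fix c v r assume "(v,r) \<in> G0"
    then obtain a t where "a \<in> A" "v = a + t *\<^sub>R z" "r = t * d"
      unfolding G0_def by blast
    then show "(c *\<^sub>R v, c*r) \<in> G0" unfolding G0_def
      by (intro CollectI exI[of _ "c *\<^sub>R a"] exI[of _ "c*t"]) (auto simp: algebra_simps Asc)
  next
    fix v r s assume "(v,r) \<in> G0" "(v,s) \<in> G0"
    then obtain a t b u where ab: "a \<in> A" "b \<in> A" and e: "v = a + t *\<^sub>R z" "r = t * d" "v = b + u *\<^sub>R z" "s = u*d"
      unfolding G0_def by blast
    have "t = u"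
    proof (rule ccontr)
      assume ne: "t \<noteq> u"
      have h: "(t - u) *\<^sub>R z = b + (-1) *\<^sub>R a" using e by (simp add: algebra_simps)
      have "z = (1/(t - u)) *\<^sub>R ((t - u) *\<^sub>R z)" using ne by simp
      then have "z = (1/(t - u)) *\<^sub>R (b + (-1) *\<^sub>R a)" using h by simp
      moreover have "b + (-1) *\<^sub>R a \<in> A" using Asc Aadd ab by blast
      ultimately have "z \<in> A" using Asc by metis
      with zA show False by simp
    qed
    then show "r = s" using e by simp
  next
    fix v r assume "(v,r) \<in> G0"
    then obtain a t where a: "a \<in> A" and e: "v = a + t *\<^sub>R z" "r = t * d"
      unfolding G0_def by blast
    show "r \<le> norm v"
    proof (cases "t = 0")
      case True then show ?thesis using e by simp
    next
      case False
      have "(- (1/t)) *\<^sub>R a \<in> A" using Asc a by blast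
      then have "d \<le> dist z ((- (1/t)) *\<^sub>R a)" unfolding d_def by (rule infdist_le)
      also have "dist z ((- (1/t)) *\<^sub>R a) = norm (z + (1/t) *\<^sub>R a)" by (simp add: dist_norm)
      finally have "\<bar>t\<bar> * d \<le> \<bar>t\<bar> * norm (z + (1/t) *\<^sub>R a)" by (simp add: mult_left_mono)
      also have "\<bar>t\<bar> * norm (z + (1/t) *\<^sub>R a) = norm (t *\<^sub>R (z + (1/t) *\<^sub>R a))" by simp
      also have "t *\<^sub>R (z + (1/t) *\<^sub>R a) = v" using e False by (simp add: algebra_simps)
      finally have "\<bar>t\<bar> * d \<le> norm v" .
      moreover have "t * d \<le> \<bar>t\<bar> * d" using dpos by (simp add: mult_right_mono)
      ultimately show ?thesis using e by linarith
    qed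
  qed
  from hb_extend[OF this] obtain \<psi> where bl: "bounded_linear \<psi>" and ext: "\<forall>(v,r)\<in>G0. \<psi> v = r" by blast
  have "\<psi> a = 0" if "a \<in> A" for a
  proof -
    have "(a + 0 *\<^sub>R z, 0 * d) \<in> G0" unfolding G0_def using that by blast
    then show ?thesis using ext by auto
  qed
  moreover have "\<psi> z = d"
  proof -
    have "(0 + 1 *\<^sub>R z, 1 * d) \<in> G0" unfolding G0_def using A0 by blast
    then show ?thesis using ext by auto
  qed
  ultimately show ?thesis using bl dpos by auto
qed



lemma ubp:
  fixes E :: "nat \<Rightarrow> 'v::banach \<Rightarrow> 'w::real_normed_vector"
  assumes bl: "\<And>n. bounded_linear (E n)"
    and bd: "\<And>x. bounded (range (\<lambda>n. E n x))"
  shows "\<exists>B. \<forall>n x. norm (E n x) \<le> B * norm x"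
proof -
  define F where "F k = (\<Inter>n. {x. norm (E n x) \<le> real k})" for k :: nat
  have clF: "closed (F k)" for k
    unfolding F_def
    by (intro closed_INT ballI closed_Collect_le continuous_intros
        linear_continuous_on bl)
  have unF: "(\<Union>k. F k) = UNIV"
  proof -
    have "x \<in> (\<Union>k. F k)" for x
    proof -
      obtain B where B: "\<And>n. norm (E n x) \<le> B" using bd[of x] unfolding bounded_iff by blast
      have "norm (E n x) \<le> real (nat \<lceil>B\<rceil>)" for n using B[of n] by linarith
      then show ?thesis unfolding F_def by blast
    qed
    then show ?thesis by blast
  qed
  have "\<exists>k. interior (F k) \<noteq> {}"
  proof (rule ccontr)
    assume "\<not> ?thesis"
    have "euclidean interior_of \<Union>(range F) = {}"
    proof (rule Baire_category_alt)
      show "completely_metrizable_space (euclidean::'v topology) \<or> locally_compact_space (euclidean::'v topology) \<and> regular_space (euclidean::'v topology)"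
        using completely_metrizable_space_euclidean by blast
      show "countable (range F)" by simp
      fix T assume "T \<in> range F"
      then obtain k where T: "T = F k" by blast
      show "closedin euclidean T \<and> euclidean interior_of T = {}"
        using clF[of k] \<open>\<not> (\<exists>k. interior (F k) \<noteq> {})\<close> T by (simp add: closed_closedin[symmetric])
    qed
    then show False using unF by simp
  qed
  then obtain k x0 where "x0 \<in> interior (F k)" by blast
  then obtain r where r: "r > 0" "ball x0 r \<subseteq> F k" using mem_interior by blast
  have Fk: "norm (E n x) \<le> real k" if "x \<in> ball x0 r" for n x using r that unfolding F_def by blast
  have "norm (E n x) \<le> (4 * real k / r) * norm x" for n x
  proof (cases "x = 0")
    case True then show ?thesis using bounded_linear.linear[OF bl, THEN linear_0] by simp
  next
    case False
    define c where "c = r / (2 * norm x)"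
    have c: "c > 0" using False r c_def by simp
    have "norm (c *\<^sub>R x) = r/2" using False c r by (simp add: c_def)
    then have "x0 + c *\<^sub>R x \<in> ball x0 r" using r by (simp add: dist_norm)
    then have a: "norm (E n (x0 + c *\<^sub>R x)) \<le> real k" by (rule Fk)
    have b: "norm (E n x0) \<le> real k" using Fk r by simp
    have "E n (c *\<^sub>R x) = E n (x0 + c *\<^sub>R x) - E n x0"
      using linear_diff[OF bounded_linear.linear[OF bl], of n "x0 + c *\<^sub>R x" x0] by simp
    then have "norm (E n (c *\<^sub>R x)) \<le> 2 * real k" using a b norm_triangle_ineq4[of "E n (x0 + c *\<^sub>R x)" "E n x0"] by simp
    then have "c * norm (E n x) \<le> 2 * real k" using c linear_scale[OF bounded_linear.linear[OF bl]] by simp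
    then have "norm (E n x) \<le> 2 * real k / c" using c by (simp add: field_simps)
    also have "2 * real k / c = (4 * real k / r) * norm x" using r False by (simp add: c_def field_simps)
    finally show ?thesis .
  qed
  then show ?thesis by blast
qed



lemma cbD:
  assumes "complex_banach csmul"
  shows "\<And>a x y. csmul a (x + y) = csmul a x + csmul a y"
    "\<And>a b x. csmul (a + b) x = csmul a x + csmul b x"
    "\<And>a b x. csmul a (csmul b x) = csmul (a * b) x"
    "\<And>r x. csmul (complex_of_real r) x = r *\<^sub>R x"
    "\<And>a x. norm (csmul a x) = cmod a * norm x"
  using assms unfolding complex_banach_def by blast+

lemma cb_scaleR:
  assumes X: "complex_banach csmul"
  shows "csmul a (r *\<^sub>R x) = r *\<^sub>R csmul a x"
proof -
  have "csmul a (r *\<^sub>R x) = csmul a (csmul (complex_of_real r) x)" using cbD(4)[OF X] by simp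
  also have "\<dots> = csmul (complex_of_real r * a) x" using cbD(3)[OF X] by (simp add: mult.commute)
  also have "\<dots> = r *\<^sub>R csmul a x" using cbD(3,4)[OF X] by metis
  finally show ?thesis .
qed

lemma cb_bl:
  assumes X: "complex_banach csmul"
  shows "bounded_linear (csmul a)"
  by (rule bounded_linear_intro[where K="cmod a"])
     (auto simp: cbD[OF X] cb_scaleR[OF X] mult.commute)

lemma cb_decomp:
  assumes X: "complex_banach csmul"
  shows "csmul a x = Re a *\<^sub>R x + Im a *\<^sub>R csmul \<i> x"
proof -
  have "a = complex_of_real (Re a) + complex_of_real (Im a) * \<i>"
    by (simp add: complex_eq_iff)
  then have "csmul a x = csmul (complex_of_real (Re a) + complex_of_real (Im a) * \<i>) x"
    by simp
  also have "\<dots> = Re a *\<^sub>R x + csmul (complex_of_real (Im a)) (csmul \<i> x)"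
    by (simp add: cbD[OF X])
  also have "\<dots> = Re a *\<^sub>R x + Im a *\<^sub>R csmul \<i> x"
    using cbD(3)[OF X, of "complex_of_real (Im a)" \<i> x] cbD(4)[OF X] by simp
  finally show ?thesis .
qed

lemma cb_ii:
  assumes X: "complex_banach csmul"
  shows "csmul \<i> (csmul \<i> x) = - x"
proof -
  have "csmul \<i> (csmul \<i> x) = csmul (complex_of_real (-1)) x" by (simp add: cbD(3)[OF X])
  also have "\<dots> = - x" using cbD(4)[OF X, of "-1" x] by simp
  finally show ?thesis .
qed

lemma cfunc_from_real:
  assumes X: "complex_banach csmul" and bl: "bounded_linear (\<psi> :: 'x::banach \<Rightarrow> real)"
  shows "cfunctional csmul (\<lambda>x. Complex (\<psi> x) (- \<psi> (csmul \<i> x)))"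
proof -
  have lin: "linear \<psi>" using bl bounded_linear.linear by blast
  have padd: "\<psi> (u + v) = \<psi> u + \<psi> v" for u v using linear_add[OF lin] .
  have psc: "\<psi> (c *\<^sub>R u) = c * \<psi> u" for c u using linear_scale[OF lin] by simp
  have pneg: "\<psi> (- u) = - \<psi> u" for u using psc[of "-1" u] by simp
  have pdiff: "\<psi> (u - v) = \<psi> u - \<psi> v" for u v using linear_diff[OF lin] .
  obtain K where K: "\<And>x. norm (\<psi> x) \<le> norm x * K" using bounded_linear.bounded[OF bl] by blast
  have "bounded_linear (\<lambda>x. Complex (\<psi> x) (- \<psi> (csmul \<i> x)))"
  proof (rule bounded_linear_intro[where K="2*K"])
    show "Complex (\<psi> (x + y)) (- \<psi> (csmul \<i> (x + y))) =
          Complex (\<psi> x) (- \<psi> (csmul \<i> x)) + Complex (\<psi> y) (- \<psi> (csmul \<i> y))" for x y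
      by (simp add: complex_eq_iff cbD(1)[OF X] padd)
    show "Complex (\<psi> (r *\<^sub>R x)) (- \<psi> (csmul \<i> (r *\<^sub>R x))) = r *\<^sub>R Complex (\<psi> x) (- \<psi> (csmul \<i> x))" for r x
      by (simp add: complex_eq_iff cb_scaleR[OF X] psc)
    show "norm (Complex (\<psi> x) (- \<psi> (csmul \<i> x))) \<le> norm x * (2*K)" for x
    proof -
      have "norm (Complex (\<psi> x) (- \<psi> (csmul \<i> x))) \<le> \<bar>\<psi> x\<bar> + \<bar>\<psi> (csmul \<i> x)\<bar>"
        using cmod_le[of "Complex (\<psi> x) (- \<psi> (csmul \<i> x))"] by simp
      also have "\<dots> \<le> norm x * K + norm (csmul \<i> x) * K" using K[of x] K[of "csmul \<i> x"] by simp
      also have "norm (csmul \<i> x) = norm x" by (simp add: cbD(5)[OF X])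
      finally show ?thesis by (simp add: algebra_simps)
    qed
  qed
  moreover have "Complex (\<psi> (csmul a x)) (- \<psi> (csmul \<i> (csmul a x))) = a * Complex (\<psi> x) (- \<psi> (csmul \<i> x))" for a x
  proof -
    have e1: "csmul a x = Re a *\<^sub>R x + Im a *\<^sub>R csmul \<i> x" by (rule cb_decomp[OF X])
    have e2: "csmul \<i> (csmul a x) = Re a *\<^sub>R csmul \<i> x - Im a *\<^sub>R x"
      by (simp add: e1 cbD(1)[OF X] cb_scaleR[OF X] cb_ii[OF X])
    show ?thesis
      unfolding e2 by (simp add: complex_eq_iff e1 padd pdiff psc pneg algebra_simps)
  qed
  ultimately show ?thesis unfolding cfunctional_def by blast
qed

lemma weak_closure:
  fixes A :: "('x::banach \<times> 'x) set"
  assumes X: "complex_banach csmul"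
    and A0: "0 \<in> A" and Aadd: "\<And>a b. a \<in> A \<Longrightarrow> b \<in> A \<Longrightarrow> a + b \<in> A"
    and Asc: "\<And>c a. a \<in> A \<Longrightarrow> c *\<^sub>R a \<in> A"
    and inA: "\<And>n. (xs n, ys n) \<in> A"
    and wx: "\<And>\<phi>. cfunctional csmul \<phi> \<Longrightarrow> (\<lambda>n. \<phi> (xs n)) \<longlonglongrightarrow> \<phi> x"
    and wy: "\<And>\<phi>. cfunctional csmul \<phi> \<Longrightarrow> (\<lambda>n. \<phi> (ys n)) \<longlonglongrightarrow> \<phi> y"
  shows "(x, y) \<in> closure A"
proof (rule ccontr)
  assume "(x, y) \<notin> closure A"
  from hb_separate[OF A0 Aadd Asc this] obtain \<psi> :: "'x \<times> 'x \<Rightarrow> real"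
    where bl: "bounded_linear \<psi>" and z: "\<forall>a\<in>A. \<psi> a = 0" and nz: "\<psi> (x, y) \<noteq> 0" by blast
  define \<psi>1 where "\<psi>1 u = \<psi> (u, 0)" for u
  define \<psi>2 where "\<psi>2 u = \<psi> (0, u)" for u
  have bl1: "bounded_linear \<psi>1" unfolding \<psi>1_def
    by (rule bounded_linear_compose[OF bl]) (auto intro!: bounded_linear_intros)
  have bl2: "bounded_linear \<psi>2" unfolding \<psi>2_def
    by (rule bounded_linear_compose[OF bl]) (auto intro!: bounded_linear_intros)
  have split: "\<psi> (a, b) = \<psi>1 a + \<psi>2 b" for a b
    using linear_add[OF bounded_linear.linear[OF bl], of "(a,0)" "(0,b)"] by (simp add: \<psi>1_def \<psi>2_def)
  have c1: "(\<lambda>n. \<psi>1 (xs n)) \<longlonglongrightarrow> \<psi>1 x"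
    using tendsto_Re[OF wx[OF cfunc_from_real[OF X bl1]]] by simp
  have c2: "(\<lambda>n. \<psi>2 (ys n)) \<longlonglongrightarrow> \<psi>2 y"
    using tendsto_Re[OF wy[OF cfunc_from_real[OF X bl2]]] by simp
  have "(\<lambda>n. \<psi> (xs n, ys n)) \<longlonglongrightarrow> \<psi> (x, y)"
    unfolding split by (rule tendsto_add[OF c1 c2])
  moreover have "(\<lambda>n. \<psi> (xs n, ys n)) = (\<lambda>n. 0)" using z inA by auto
  ultimately have "\<psi> (x, y) = 0" using LIMSEQ_unique tendsto_const by metis
  with nz show False by simp
qed



lemma bo_mem: "bounded_op csmul G \<Longrightarrow> (x, op_app G x) \<in> G"
  and bo_eq: "bounded_op csmul G \<Longrightarrow> (x, y) \<in> G \<Longrightarrow> y = op_app G x"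
  and bo_bl: "bounded_op csmul G \<Longrightarrow> bounded_linear (op_app G)"
  and bo_cs: "bounded_op csmul G \<Longrightarrow> op_app G (csmul a x) = csmul a (op_app G x)"
proof -
  assume "bounded_op csmul G"
  then obtain T where T: "G = {(x, T x) | x. True}" "bounded_linear T" "\<And>a x. T (csmul a x) = csmul a (T x)"
    unfolding bounded_op_def by blast
  have app: "op_app G u = T u" for u unfolding op_app_def T(1) by auto
  show "(x, op_app G x) \<in> G" using T(1) app by simp
  show "(x, y) \<in> G \<Longrightarrow> y = op_app G x" using T(1) app by simp
  have "op_app G = T" by (rule ext) (simp add: app)
  then show "bounded_linear (op_app G)" using T(2) by simp
  show "op_app G (csmul a x) = csmul a (op_app G x)" using T(3) app by simp
qed

lemma bo_dom: "bounded_op csmul G \<Longrightarrow> Domain G = UNIV"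
  using bo_mem by blast

lemma bounded_opI:
  assumes "bounded_linear T" "\<And>a x. T (csmul a x) = csmul a (T x)"
    and "\<And>x y. (x,y) \<in> G \<longleftrightarrow> y = T x"
  shows "bounded_op csmul G"
  unfolding bounded_op_def using assms by (intro exI[of _ T]) auto

lemma total_eq:
  assumes "\<And>x y z. (x,y) \<in> H \<Longrightarrow> (x,z) \<in> H \<Longrightarrow> y = z" "G \<subseteq> H" "Domain H \<subseteq> Domain G"
  shows "G = H"
  using assms by fast

lemma bo_sum:
  assumes X: "complex_banach csmul" and b1: "bounded_op csmul G1" and b2: "bounded_op csmul G2"
  shows "bounded_op csmul (op_sum G1 G2)"
proof (rule bounded_opI[where T="\<lambda>x. op_app G1 x + op_app G2 x"])
  show "bounded_linear (\<lambda>x. op_app G1 x + op_app G2 x)"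
    using bo_bl[OF b1] bo_bl[OF b2] by (rule bounded_linear_add)
  show "op_app G1 (csmul a x) + op_app G2 (csmul a x) = csmul a (op_app G1 x + op_app G2 x)" for a x
    by (simp add: bo_cs[OF b1] bo_cs[OF b2] cbD(1)[OF X])
  show "(x,y) \<in> op_sum G1 G2 \<longleftrightarrow> y = op_app G1 x + op_app G2 x" for x y
    unfolding op_sum_def using bo_mem[OF b1] bo_mem[OF b2] bo_eq[OF b1] bo_eq[OF b2] by blast
qed

lemma bo_scal:
  assumes X: "complex_banach csmul" and b1: "bounded_op csmul G1"
  shows "bounded_op csmul (op_scal csmul a G1)"
proof (rule bounded_opI[where T="\<lambda>x. csmul a (op_app G1 x)"])
  show "bounded_linear (\<lambda>x. csmul a (op_app G1 x))"
    using cb_bl[OF X] bo_bl[OF b1] by (rule bounded_linear_compose)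
  show "csmul a (op_app G1 (csmul b x)) = csmul b (csmul a (op_app G1 x))" for b x
    by (simp add: bo_cs[OF b1] cbD(3)[OF X] mult.commute)
  show "(x,y) \<in> op_scal csmul a G1 \<longleftrightarrow> y = csmul a (op_app G1 x)" for x y
    unfolding op_scal_def using bo_mem[OF b1] bo_eq[OF b1] by blast
qed

lemma bo_mult:
  assumes b1: "bounded_op csmul G1" and b2: "bounded_op csmul G2"
  shows "bounded_op csmul (op_mult G1 G2)"
proof (rule bounded_opI[where T="\<lambda>x. op_app G1 (op_app G2 x)"])
  show "bounded_linear (\<lambda>x. op_app G1 (op_app G2 x))"
    using bo_bl[OF b1] bo_bl[OF b2] by (rule bounded_linear_compose)
  show "op_app G1 (op_app G2 (csmul a x)) = csmul a (op_app G1 (op_app G2 x))" for a x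
    by (simp add: bo_cs[OF b1] bo_cs[OF b2])
  show "(x,y) \<in> op_mult G1 G2 \<longleftrightarrow> y = op_app G1 (op_app G2 x)" for x y
    unfolding op_mult_def using bo_mem[OF b1] bo_mem[OF b2] bo_eq[OF b1] bo_eq[OF b2] by blast
qed

locale pc =
  fixes csmul :: "complex \<Rightarrow> 'x::banach \<Rightarrow> 'x"
    and smul :: "complex \<Rightarrow> 'f::comm_ring_1 \<Rightarrow> 'f"
    and \<Phi> :: "'f \<Rightarrow> ('x \<times> 'x) set"
  assumes X: "complex_banach csmul"
    and F: "comm_calgebra smul"
    and PC: "proto_calculus smul csmul \<Phi>"
begin

lemma isop: "is_op csmul (\<Phi> f)" and cl: "closed (\<Phi> f)"
  using PC unfolding proto_calculus_def closed_op_def by auto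

lemma sv: "(x,y) \<in> \<Phi> f \<Longrightarrow> (x,z) \<in> \<Phi> f \<Longrightarrow> y = z"
  using isop unfolding is_op_def by blast

lemma z0: "(0,0) \<in> \<Phi> f" and padd: "(x,y) \<in> \<Phi> f \<Longrightarrow> (u,v) \<in> \<Phi> f \<Longrightarrow> (x+u, y+v) \<in> \<Phi> f"
  and pcs: "(x,y) \<in> \<Phi> f \<Longrightarrow> (csmul a x, csmul a y) \<in> \<Phi> f"
  using isop unfolding is_op_def by blast+

lemma pscal: "op_scal csmul a (\<Phi> f) \<subseteq> \<Phi> (smul a f)"
  and psum: "op_sum (\<Phi> f) (\<Phi> g) \<subseteq> \<Phi> (f + g)"
  and pmult: "op_mult (\<Phi> f) (\<Phi> g) \<subseteq> \<Phi> (f * g)"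
  and pdom: "Domain (op_mult (\<Phi> f) (\<Phi> g)) = Domain (\<Phi> g) \<inter> Domain (\<Phi> (f * g))"
  using PC unfolding proto_calculus_def by blast+

lemma fsmul: "smul a (f * g) = smul a f * g"
  using F unfolding comm_calgebra_def by blast

lemma into_bounded: assumes "bounded_op csmul G" "G \<subseteq> \<Phi> h" shows "\<Phi> h = G"
  by (rule total_eq[symmetric]) (use sv bo_dom[OF assms(1)] assms(2) in auto)

lemma commI:
  assumes be: "bounded_op csmul (\<Phi> e)" and bhe: "bounded_op csmul (\<Phi> (h * e))"
  shows "op_mult (\<Phi> e) (\<Phi> h) \<subseteq> op_mult (\<Phi> h) (\<Phi> e) \<and> op_mult (\<Phi> h) (\<Phi> e) = \<Phi> (h * e)"
proof -
  have eq: "op_mult (\<Phi> h) (\<Phi> e) = \<Phi> (h * e)"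
    by (rule total_eq) (use sv pmult pdom bo_dom[OF be] bo_dom[OF bhe] in auto)
  have "op_mult (\<Phi> e) (\<Phi> h) \<subseteq> \<Phi> (h * e)" using pmult[of e h] by (simp add: mult.commute)
  with eq show ?thesis by simp
qed

lemma ai_commI:
  assumes "\<And>n. bounded_op csmul (\<Phi> (e n))" "\<And>n. bounded_op csmul (\<Phi> (h * e n))"
  shows "ai_commutes csmul \<Phi> e h"
  unfolding ai_commutes_def using commI assms by blast

lemma key:
  assumes ai: "ai_commutes csmul \<Phi> e h" and be: "bounded_op csmul (\<Phi> (e n))" and xy: "(x,y) \<in> \<Phi> h"
  shows "(op_app (\<Phi> (e n)) x, op_app (\<Phi> (e n)) y) \<in> \<Phi> h"
proof -
  have "(x, op_app (\<Phi> (e n)) y) \<in> op_mult (\<Phi> (e n)) (\<Phi> h)"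
    unfolding op_mult_def using xy bo_mem[OF be] by blast
  then have "(x, op_app (\<Phi> (e n)) y) \<in> op_mult (\<Phi> h) (\<Phi> (e n))"
    using ai unfolding ai_commutes_def by blast
  then obtain w where "(x,w) \<in> \<Phi> (e n)" "(w, op_app (\<Phi> (e n)) y) \<in> \<Phi> h"
    unfolding op_mult_def by blast
  then show ?thesis using bo_eq[OF be] by blast
qed

lemma domE:
  assumes ai: "ai_commutes csmul \<Phi> e h" and be: "bounded_op csmul (\<Phi> (e n))"
  shows "op_app (\<Phi> (e n)) x \<in> Domain (\<Phi> h)"
proof -
  have b: "bounded_op csmul (\<Phi> (h * e n))" and eq: "op_mult (\<Phi> h) (\<Phi> (e n)) = \<Phi> (h * e n)"
    using ai unfolding ai_commutes_def by blast+
  have "(x, op_app (\<Phi> (h * e n)) x) \<in> op_mult (\<Phi> h) (\<Phi> (e n))" using bo_mem[OF b] eq by simp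
  then obtain w z where "(x,w) \<in> \<Phi> (e n)" "(w, z) \<in> \<Phi> h"
    unfolding op_mult_def by blast
  then show ?thesis using bo_eq[OF be] by blast
qed

lemma sum_bounded:
  assumes "bounded_op csmul (\<Phi> (f * e))" "bounded_op csmul (\<Phi> (g * e))"
  shows "bounded_op csmul (\<Phi> ((f + g) * e))"
proof -
  have "op_sum (\<Phi> (f * e)) (\<Phi> (g * e)) \<subseteq> \<Phi> ((f + g) * e)"
    using psum[of "f * e" "g * e"] by (simp add: distrib_right)
  then show ?thesis using into_bounded bo_sum[OF X assms] by metis
qed

lemma scal_bounded:
  assumes "bounded_op csmul (\<Phi> (f * e))"
  shows "bounded_op csmul (\<Phi> (smul a f * e))"
proof -
  have "op_scal csmul a (\<Phi> (f * e)) \<subseteq> \<Phi> (smul a f * e)"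
    using pscal[of a "f * e"] by (simp add: fsmul)
  then show ?thesis using into_bounded bo_scal[OF X assms] by metis
qed

lemma mult_bounded:
  assumes "bounded_op csmul (\<Phi> f)" "bounded_op csmul (\<Phi> g)"
  shows "bounded_op csmul (\<Phi> (f * g))" "\<Phi> (f * g) = op_mult (\<Phi> f) (\<Phi> g)"
proof -
  show "\<Phi> (f * g) = op_mult (\<Phi> f) (\<Phi> g)" using into_bounded bo_mult[OF assms] pmult by metis
  then show "bounded_op csmul (\<Phi> (f * g))" using bo_mult[OF assms] by simp
qed

lemma ai_sum:
  assumes "ai_commutes csmul \<Phi> e f" "ai_commutes csmul \<Phi> e g" "\<And>n. bounded_op csmul (\<Phi> (e n))"
  shows "ai_commutes csmul \<Phi> e (f + g)"
  using assms by (intro ai_commI sum_bounded) (auto simp: ai_commutes_def)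

lemma ai_scal:
  assumes "ai_commutes csmul \<Phi> e f" "\<And>n. bounded_op csmul (\<Phi> (e n))"
  shows "ai_commutes csmul \<Phi> e (smul a f)"
  using assms by (intro ai_commI scal_bounded) (auto simp: ai_commutes_def)

lemma ai_mult:
  assumes "ai_commutes csmul \<Phi> e f" "ai_commutes csmul \<Phi> e g" "\<And>n. bounded_op csmul (\<Phi> (e n))"
  shows "ai_commutes csmul \<Phi> (\<lambda>n. e n * e n) (f * g)"
proof (rule ai_commI)
  show "bounded_op csmul (\<Phi> (e n * e n))" for n using mult_bounded assms(3) by blast
  show "bounded_op csmul (\<Phi> (f * g * (e n * e n)))" for n
  proof -
    have eq: "f * g * (e n * e n) = (f * e n) * (g * e n)" by (simp add: ac_simps)
    have "bounded_op csmul (\<Phi> (f * e n))" "bounded_op csmul (\<Phi> (g * e n))"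
      using assms(1,2) by (auto simp: ai_commutes_def)
    then have "bounded_op csmul (\<Phi> ((f * e n) * (g * e n)))" by (rule mult_bounded(1))
    then show ?thesis unfolding eq .
  qed
qed

lemma sum_closure:
  assumes aif: "ai_commutes csmul \<Phi> e f" and aig: "ai_commutes csmul \<Phi> e g"
    and be: "\<And>n. bounded_op csmul (\<Phi> (e n))"
    and w: "\<And>x \<phi>. cfunctional csmul \<phi> \<Longrightarrow> (\<lambda>n. \<phi> (op_app (\<Phi> (e n)) x)) \<longlonglongrightarrow> \<phi> x"
  shows "closure (op_sum (\<Phi> f) (\<Phi> g)) = \<Phi> (f + g)"
proof
  show "closure (op_sum (\<Phi> f) (\<Phi> g)) \<subseteq> \<Phi> (f + g)"
    by (rule closure_minimal[OF psum cl])
  show "\<Phi> (f + g) \<subseteq> closure (op_sum (\<Phi> f) (\<Phi> g))"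
  proof
    fix p assume p: "p \<in> \<Phi> (f + g)"
    obtain x y where pxy: "p = (x,y)" by (cases p)
    let ?A = "op_sum (\<Phi> f) (\<Phi> g)"
    have aifg: "ai_commutes csmul \<Phi> e (f + g)" using ai_sum aif aig be by blast
    have inA: "(op_app (\<Phi> (e n)) x, op_app (\<Phi> (e n)) y) \<in> ?A" for n
    proof -
      obtain u where u: "(op_app (\<Phi> (e n)) x, u) \<in> \<Phi> f" using domE[OF aif be] by blast
      obtain v where v: "(op_app (\<Phi> (e n)) x, v) \<in> \<Phi> g" using domE[OF aig be] by blast
      have m: "(op_app (\<Phi> (e n)) x, u + v) \<in> ?A" unfolding op_sum_def using u v by blast
      have "(op_app (\<Phi> (e n)) x, op_app (\<Phi> (e n)) y) \<in> \<Phi> (f + g)" using key[OF aifg be] p pxy by simp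
      moreover have "(op_app (\<Phi> (e n)) x, u + v) \<in> \<Phi> (f + g)" using m psum by blast
      ultimately have "op_app (\<Phi> (e n)) y = u + v" using sv by blast
      then show ?thesis using m by simp
    qed
    have "(x, y) \<in> closure ?A"
    proof (rule weak_closure[where xs="\<lambda>n. op_app (\<Phi> (e n)) x" and ys="\<lambda>n. op_app (\<Phi> (e n)) y", OF X _ _ _ inA w[of _ x] w[of _ y]])
      show "0 \<in> ?A" unfolding op_sum_def zero_prod_def using z0 by force
      show "a + b \<in> ?A" if "a \<in> ?A" "b \<in> ?A" for a b
      proof -
        from that obtain x1 y1 z1 x2 y2 z2 where "a = (x1, y1 + z1)" "(x1,y1) \<in> \<Phi> f" "(x1,z1) \<in> \<Phi> g"
          "b = (x2, y2 + z2)" "(x2,y2) \<in> \<Phi> f" "(x2,z2) \<in> \<Phi> g" unfolding op_sum_def by blast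
        then show ?thesis unfolding op_sum_def
          by (intro CollectI exI[of _ "x1 + x2"] exI[of _ "y1 + y2"] exI[of _ "z1 + z2"])
             (auto simp: padd algebra_simps)
      qed
      show "c *\<^sub>R a \<in> ?A" if "a \<in> ?A" for c a
      proof -
        from that obtain x1 y1 z1 where "a = (x1, y1 + z1)" "(x1,y1) \<in> \<Phi> f" "(x1,z1) \<in> \<Phi> g"
          unfolding op_sum_def by blast
        then show ?thesis unfolding op_sum_def
          by (intro CollectI exI[of _ "c *\<^sub>R x1"] exI[of _ "c *\<^sub>R y1"] exI[of _ "c *\<^sub>R z1"])
             (auto simp: pcs[of _ _ _ "complex_of_real c", unfolded cbD(4)[OF X]] scaleR_right_distrib)
      qed
    qed
    then show "p \<in> closure ?A" using pxy by simp
  qed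
qed

lemma strong_to_weak:
  assumes "approx_identity csmul \<Phi> e"
  shows "weak_approx_identity csmul \<Phi> e"
  using assms unfolding approx_identity_def weak_approx_identity_def cfunctional_def
  by (auto intro: bounded_linear.tendsto)

lemma part_b:
  assumes ai: "approx_identity csmul \<Phi> e" and aif: "ai_commutes csmul \<Phi> e f"
    and aig: "ai_commutes csmul \<Phi> e g"
  shows "approx_identity csmul \<Phi> (\<lambda>n. e n * e n) \<and> closure (op_mult (\<Phi> f) (\<Phi> g)) = \<Phi> (f * g)"
proof -
  have be: "bounded_op csmul (\<Phi> (e n))" for n using ai unfolding approx_identity_def by blast
  have conv: "(\<lambda>n. op_app (\<Phi> (e n)) x) \<longlonglongrightarrow> x" for x using ai unfolding approx_identity_def by blast
  define E where "E n = op_app (\<Phi> (e n))" for n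
  have be2: "bounded_op csmul (\<Phi> (e n * e n))" for n using mult_bounded be by blast
  have E2: "op_app (\<Phi> (e n * e n)) x = E n (E n x)" for n x
  proof -
    have "(x, E n (E n x)) \<in> op_mult (\<Phi> (e n)) (\<Phi> (e n))"
      unfolding op_mult_def E_def using bo_mem[OF be] by blast
    then have "(x, E n (E n x)) \<in> \<Phi> (e n * e n)" using pmult by blast
    then show ?thesis using bo_eq[OF be2] by simp
  qed
  have blE: "bounded_linear (E n)" for n unfolding E_def using bo_bl[OF be] .
  have "bounded (range (\<lambda>n. E n x))" for x
    unfolding Bseq_eq_bounded[symmetric] E_def using conv by (intro convergent_imp_Bseq convergentI)
  from ubp[OF blE this] obtain B where B: "\<And>n x. norm (E n x) \<le> B * norm x" by blast
  have conv2: "(\<lambda>n. op_app (\<Phi> (e n * e n)) x) \<longlonglongrightarrow> x" for x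
  proof -
    have c0: "(\<lambda>n. E n x - x) \<longlonglongrightarrow> 0" using conv[of x] unfolding E_def by (rule LIM_zero)
    have "(\<lambda>n. (max B 0 + 1) * norm (E n x - x)) \<longlonglongrightarrow> (max B 0 + 1) * 0"
      by (intro tendsto_mult tendsto_const tendsto_norm_zero c0)
    then have g0: "(\<lambda>n. (max B 0 + 1) * norm (E n x - x)) \<longlonglongrightarrow> 0" by simp
    have "norm (E n (E n x) - x) \<le> (max B 0 + 1) * norm (E n x - x)" for n
    proof -
      have "E n (E n x) - x = E n (E n x - x) + (E n x - x)"
        using linear_diff[OF bounded_linear.linear[OF blE], of n "E n x" x] by simp
      then have "norm (E n (E n x) - x) \<le> norm (E n (E n x - x)) + norm (E n x - x)"
        by (metis norm_triangle_ineq)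
      also have "norm (E n (E n x - x)) \<le> max B 0 * norm (E n x - x)"
        using B[of n "E n x - x"] by (meson max.cobounded1 mult_right_mono norm_ge_zero order_trans)
      finally show ?thesis by (simp add: algebra_simps)
    qed
    then have "(\<lambda>n. E n (E n x) - x) \<longlonglongrightarrow> 0"
      by (intro Lim_null_comparison[OF _ g0]) simp
    then have "(\<lambda>n. E n (E n x)) \<longlonglongrightarrow> x" by (rule LIM_zero_cancel)
    then show ?thesis by (simp add: E2)
  qed
  have ai2: "approx_identity csmul \<Phi> (\<lambda>n. e n * e n)"
    unfolding approx_identity_def using be2 conv2 by blast
  have aifg: "ai_commutes csmul \<Phi> (\<lambda>n. e n * e n) (f * g)" using ai_mult[OF aif aig be] .
  have "closure (op_mult (\<Phi> f) (\<Phi> g)) = \<Phi> (f * g)"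
  proof
    show "closure (op_mult (\<Phi> f) (\<Phi> g)) \<subseteq> \<Phi> (f * g)"
      by (rule closure_minimal[OF pmult cl])
    show "\<Phi> (f * g) \<subseteq> closure (op_mult (\<Phi> f) (\<Phi> g))"
    proof
      fix p assume p: "p \<in> \<Phi> (f * g)"
      obtain x y where pxy: "p = (x,y)" by (cases p)
      define s where "s n = (op_app (\<Phi> (e n * e n)) x, op_app (\<Phi> (e n * e n)) y)" for n
      have "s n \<in> op_mult (\<Phi> f) (\<Phi> g)" for n
      proof -
        have k: "s n \<in> \<Phi> (f * g)" unfolding s_def
          using key[OF aifg be2[of n], where x=x and y=y] p pxy by simp
        have "E n (E n x) \<in> Domain (\<Phi> g)" unfolding E_def using domE[OF aig be] .
        moreover have "E n (E n x) \<in> Domain (\<Phi> (f * g))" using k unfolding s_def E2 by blast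
        ultimately have "E n (E n x) \<in> Domain (op_mult (\<Phi> f) (\<Phi> g))" using pdom by blast
        then obtain z where z: "(E n (E n x), z) \<in> op_mult (\<Phi> f) (\<Phi> g)" by blast
        then have "(E n (E n x), z) \<in> \<Phi> (f * g)" using pmult by blast
        then have "z = op_app (\<Phi> (e n * e n)) y" using k sv unfolding s_def E2 by blast
        then show ?thesis using z unfolding s_def E2 by simp
      qed
      moreover have "s \<longlonglongrightarrow> (x, y)" unfolding s_def by (intro tendsto_Pair conv2)
      ultimately show "p \<in> closure (op_mult (\<Phi> f) (\<Phi> g))"
        unfolding pxy closure_sequential by blast
    qed
  qed
  with ai2 show ?thesis by blast
qed

end

theorem theorem7p2:
  fixes csmul :: "complex \<Rightarrow> 'x::banach \<Rightarrow> 'x"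
    and smul :: "complex \<Rightarrow> 'f::comm_ring_1 \<Rightarrow> 'f"
    and \<Phi> :: "'f \<Rightarrow> ('x \<times> 'x) set"
  assumes X: "complex_banach csmul"
    and F: "comm_calgebra smul"
    and PC: "proto_calculus smul csmul \<Phi>"
  shows
    \<comment> \<open>(a), strong version\<close>
    "(\<forall>e f g. approx_identity_for csmul \<Phi> e f \<and> approx_identity_for csmul \<Phi> e g \<longrightarrow>
        approx_identity_for csmul \<Phi> e (f + g) \<and>
        (\<forall>a. approx_identity_for csmul \<Phi> e (smul a f)) \<and>
        closure (op_sum (\<Phi> f) (\<Phi> g)) = \<Phi> (f + g)) \<and>
     \<comment> \<open>(a), weak version\<close>
     (\<forall>e f g. weak_approx_identity_for csmul \<Phi> e f \<and> weak_approx_identity_for csmul \<Phi> e g \<longrightarrow>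
        weak_approx_identity_for csmul \<Phi> e (f + g) \<and>
        (\<forall>a. weak_approx_identity_for csmul \<Phi> e (smul a f)) \<and>
        closure (op_sum (\<Phi> f) (\<Phi> g)) = \<Phi> (f + g)) \<and>
     \<comment> \<open>(b)\<close>
     (\<forall>e f g. approx_identity_for csmul \<Phi> e f \<and> approx_identity_for csmul \<Phi> e g \<longrightarrow>
        approx_identity_for csmul \<Phi> (\<lambda>n. e n * e n) (f * g) \<and>
        closure (op_mult (\<Phi> f) (\<Phi> g)) = \<Phi> (f * g))"
proof -
  interpret pc csmul smul \<Phi> using X F PC by (rule pc.intro)
  have A: "weak_approx_identity_for csmul \<Phi> e (f + g) \<and>
        (\<forall>a. weak_approx_identity_for csmul \<Phi> e (smul a f)) \<and>
        closure (op_sum (\<Phi> f) (\<Phi> g)) = \<Phi> (f + g)"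
    if h: "weak_approx_identity_for csmul \<Phi> e f" "weak_approx_identity_for csmul \<Phi> e g" for e f g
  proof -
    have w: "weak_approx_identity csmul \<Phi> e" and aif: "ai_commutes csmul \<Phi> e f"
      and aig: "ai_commutes csmul \<Phi> e g"
      using h unfolding weak_approx_identity_for_def by blast+
    have be: "\<And>n. bounded_op csmul (\<Phi> (e n))"
      and wc: "\<And>x \<phi>. cfunctional csmul \<phi> \<Longrightarrow> (\<lambda>n. \<phi> (op_app (\<Phi> (e n)) x)) \<longlonglongrightarrow> \<phi> x"
      using w unfolding weak_approx_identity_def by blast+
    show ?thesis unfolding weak_approx_identity_for_def
      using w ai_sum[OF aif aig be] ai_scal[OF aif be] sum_closure[OF aif aig be wc] by blast
  qed
  have S: "approx_identity_for csmul \<Phi> e (f + g) \<and>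
        (\<forall>a. approx_identity_for csmul \<Phi> e (smul a f)) \<and>
        closure (op_sum (\<Phi> f) (\<Phi> g)) = \<Phi> (f + g) \<and>
        approx_identity_for csmul \<Phi> (\<lambda>n. e n * e n) (f * g) \<and>
        closure (op_mult (\<Phi> f) (\<Phi> g)) = \<Phi> (f * g)"
    if h: "approx_identity_for csmul \<Phi> e f" "approx_identity_for csmul \<Phi> e g" for e f g
  proof -
    have s: "approx_identity csmul \<Phi> e" and aif: "ai_commutes csmul \<Phi> e f"
      and aig: "ai_commutes csmul \<Phi> e g"
      using h unfolding approx_identity_for_def by blast+
    have be: "\<And>n. bounded_op csmul (\<Phi> (e n))" using s unfolding approx_identity_def by blast
    have ww: "weak_approx_identity_for csmul \<Phi> e f" "weak_approx_identity_for csmul \<Phi> e g"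
      using strong_to_weak[OF s] aif aig unfolding weak_approx_identity_for_def by blast+
    have 1: "approx_identity_for csmul \<Phi> e (f + g)"
      unfolding approx_identity_for_def using s ai_sum[OF aif aig be] by blast
    have 2: "approx_identity_for csmul \<Phi> e (smul a f)" for a
      unfolding approx_identity_for_def using s ai_scal[OF aif be] by blast
    have 3: "closure (op_sum (\<Phi> f) (\<Phi> g)) = \<Phi> (f + g)" using A[OF ww] by blast
    have 4: "approx_identity_for csmul \<Phi> (\<lambda>n. e n * e n) (f * g)"
      unfolding approx_identity_for_def using part_b[OF s aif aig] ai_mult[OF aif aig be] by blast
    have 5: "closure (op_mult (\<Phi> f) (\<Phi> g)) = \<Phi> (f * g)" using part_b[OF s aif aig] by blast
    show ?thesis using 1 2 3 4 5 by blast
  qed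
  show ?thesis using S A by blast
qed

end
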